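(* Let $\mathcal{M}$ be a metric space on $\omega$ whose completion $\mathcal{C}(\mathcal{M})$ is a proper metric space. Let $\alpha$ be an ordinal and let $\bar a,\bar b$ be tuples of elements of $\mathcal{C}(\mathcal{M})$ of the same length $p$. Suppose $(\bar a,\bar b)$ is the limit in $\mathcal{C}(\mathcal{M})^{2p}$ of a sequence $\langle(\bar a_n,\bar b_n):n\in\omega\rangle$ such that $\mathrm{R}(\bar a_n,\bar b_n)>\alpha$ for all $n$. Then $\mathrm{R}(\bar a,\bar b)>\alpha$.
   Context: A metric space is proper if every closed ball $\{y:d(x,y)\le r\}$ is compact. The metric on $\mathcal{C}(\mathcal{M})^k$ is $d(\bar u,\bar v)=\sum_{i<k}d(u_i,v_i)$. $\mathrm{REC}$ is the set of recursive, strictly decreasing $f:\omega\to\mathbb{Q}^+$ converging to $0$. For $f\in\mathrm{REC}$, tuples $\bar a=(a_0,\dots,a_{p-1})$, $\bar b=(b_0,\dots,b_{p-1})$ from $\mathcal{C}(\mathcal{M})$ and an ordinal $\alpha$, the game $G^{f,\bar a,\bar b}_\alpha$: at move $i=0,1,\dots$, Player 1 plays an ordinal $\alpha_i$ with $\alpha_0<\alpha$ and $\alpha_i<\alpha_{i-1}$ for $i>0$, together with an element of $\mathcal{M}$: if $i$ is even Player 1 plays $c_i\in\mathcal{M}$ and Player 2 responds $d_i\in\mathcal{M}$; if $i$ is odd Player 1 plays $d_i\in\mathcal{M}$ and Player 2 responds $c_i\in\mathcal{M}$. The game ends after Player 2 answers the move where $\alpha_{k-1}=0$. Player 2 wins iff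 (I) $|d(a_i,c_j)-d(b_i,d_j)|<f(j)$ for all $i<p$, $j<k$, and (II) $|d(c_i,c_j)-d(d_i,d_j)|<f(i)+f(j)$ for all $i,j<k$. $\bar a\sim^f_\alpha\bar b$ means Player 2 has a winning strategy in $G^{f,\bar a,\bar b}_\alpha$; $\mathrm{R}(\bar a,\bar b)$ is the least ordinal $\mu$ such that $\neg(\bar a\sim^f_\mu\bar b)$ for some $f\in\mathrm{REC}$, or $\infty$ if none. *)

theory Defs
  imports "HOL-Analysis.Analysis"
begin

inductive recfn :: "nat \<Rightarrow> (nat list \<Rightarrow> nat) \<Rightarrow> bool" where
  rf_zero: "recfn n (\<lambda>xs. 0)"
| rf_succ: "recfn 1 (\<lambda>xs. Suc (hd xs))"
| rf_proj: "i < n \<Longrightarrow> recfn n (\<lambda>xs. xs ! i)"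
| rf_comp: "recfn m g \<Longrightarrow> (\<forall>j<m. recfn n (hs j)) \<Longrightarrow>
            recfn n (\<lambda>xs. g (map (\<lambda>j. hs j xs) [0..<m]))"
| rf_prim: "recfn n g \<Longrightarrow> recfn (n + 2) h \<Longrightarrow>
            recfn (n + 1) (\<lambda>xs. rec_nat (g (tl xs)) (\<lambda>k r. h (k # r # tl xs)) (hd xs))"
| rf_mu: "recfn (n + 1) g \<Longrightarrow> (\<forall>xs. length xs = n \<longrightarrow> (\<exists>y. g (y # xs) = 0)) \<Longrightarrow>
          recfn n (\<lambda>xs. LEAST y. g (y # xs) = 0)"

definition computable :: "(nat \<Rightarrow> nat) \<Rightarrow> bool" where
  "computable f \<longleftrightarrow> (\<exists>g. recfn 1 g \<and> (\<forall>x. f x = g [x]))"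

definition recursive_rat :: "(nat \<Rightarrow> rat) \<Rightarrow> bool" where
  "recursive_rat f \<longleftrightarrow> (\<exists>g h. computable g \<and> computable h \<and>
      (\<forall>n. f n = of_nat (g n) / of_nat (h n)))"

definition REC :: "(nat \<Rightarrow> rat) set" where
  "REC = {f. recursive_rat f \<and> (\<forall>n. 0 < f n) \<and> (\<forall>m n. m < n \<longrightarrow> f n < f m)
             \<and> (\<lambda>n. real_of_rat (f n)) \<longlonglongrightarrow> 0}"

text \<open>Points of M are naturals, embedded
  into the completion by e. A strategy for Player 2 maps the sequence of Player 1's moves
  (ordinal, point) so far to Player 2's answer. A complete play is a nonempty list of
  Player 1 moves with ordinals below alpha, strictly decreasing, the last one minimal (= 0).\<close>

definition legal_play :: "'o::wellorder \<Rightarrow> ('o \<times> nat) list \<Rightarrow> bool" where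
  "legal_play \<alpha> ms \<longleftrightarrow> ms \<noteq> [] \<and> fst (ms ! 0) < \<alpha>
     \<and> (\<forall>i. Suc i < length ms \<longrightarrow> fst (ms ! Suc i) < fst (ms ! i))
     \<and> \<not> (\<exists>\<beta>. \<beta> < fst (last ms))"

definition play_c :: "(('o \<times> nat) list \<Rightarrow> nat) \<Rightarrow> ('o \<times> nat) list \<Rightarrow> nat \<Rightarrow> nat" where
  "play_c \<sigma> ms i = (if even i then snd (ms ! i) else \<sigma> (take (Suc i) ms))"

definition play_d :: "(('o \<times> nat) list \<Rightarrow> nat) \<Rightarrow> ('o \<times> nat) list \<Rightarrow> nat \<Rightarrow> nat" where
  "play_d \<sigma> ms i = (if even i then \<sigma> (take (Suc i) ms) else snd (ms ! i))"

definition game_won :: "(nat \<Rightarrow> 'a::metric_space) \<Rightarrow> (nat \<Rightarrow> rat) \<Rightarrow> 'a list \<Rightarrow> 'a list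
    \<Rightarrow> nat \<Rightarrow> (nat \<Rightarrow> nat) \<Rightarrow> (nat \<Rightarrow> nat) \<Rightarrow> bool" where
  "game_won e f a b k c d \<longleftrightarrow>
     (\<forall>i<length a. \<forall>j<k. \<bar>dist (a ! i) (e (c j)) - dist (b ! i) (e (d j))\<bar> < real_of_rat (f j))
   \<and> (\<forall>i<k. \<forall>j<k. \<bar>dist (e (c i)) (e (c j)) - dist (e (d i)) (e (d j))\<bar>
                      < real_of_rat (f i) + real_of_rat (f j))"

definition sim :: "(nat \<Rightarrow> 'a::metric_space) \<Rightarrow> (nat \<Rightarrow> rat) \<Rightarrow> 'a list \<Rightarrow> 'a list
    \<Rightarrow> 'o::wellorder \<Rightarrow> bool" where
  "sim e f a b \<alpha> \<longleftrightarrow> (\<exists>\<sigma>. \<forall>ms. legal_play \<alpha> ms \<longrightarrow>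
       game_won e f a b (length ms) (play_c \<sigma> ms) (play_d \<sigma> ms))"

text \<open>R(a,b) > alpha, where R(a,b) is the least ordinal mu with not (a ~^f_mu b) for some
  f in REC: equivalently no mu <= alpha and f in REC with not (a ~^f_mu b).\<close>
definition R_gt :: "(nat \<Rightarrow> 'a::metric_space) \<Rightarrow> 'a list \<Rightarrow> 'a list \<Rightarrow> 'o::wellorder \<Rightarrow> bool" where
  "R_gt e a b \<alpha> \<longleftrightarrow> \<not> (\<exists>\<mu>\<le>\<alpha>. \<exists>f\<in>REC. \<not> sim e f a b \<mu>)"

definition tuple_dist :: "'a::metric_space list \<Rightarrow> 'a list \<Rightarrow> real" where
  "tuple_dist u v = (\<Sum>i<length u. dist (u ! i) (v ! i))"

end

theory Submission
  imports Defs
begin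


definition Cm :: "('p \<Rightarrow> 'a) \<Rightarrow> ('q \<Rightarrow> 'a) \<Rightarrow> (('o \<times> 'p) list \<Rightarrow> 'q) \<Rightarrow> ('o \<times> 'p) list \<Rightarrow> nat \<Rightarrow> 'a" where
  "Cm E1 E2 \<sigma> ms j = (if even j then E1 (snd (ms ! j)) else E2 (\<sigma> (take (Suc j) ms)))"
definition Dm :: "('p \<Rightarrow> 'a) \<Rightarrow> ('q \<Rightarrow> 'a) \<Rightarrow> (('o \<times> 'p) list \<Rightarrow> 'q) \<Rightarrow> ('o \<times> 'p) list \<Rightarrow> nat \<Rightarrow> 'a" where
  "Dm E1 E2 \<sigma> ms j = (if even j then E2 (\<sigma> (take (Suc j) ms)) else E1 (snd (ms ! j)))"

definition wong :: "(real \<Rightarrow> real \<Rightarrow> bool) \<Rightarrow> ('p \<Rightarrow> 'a::metric_space) \<Rightarrow> ('q \<Rightarrow> 'a) \<Rightarrow> 'a list \<Rightarrow> 'a list \<Rightarrow> real list \<Rightarrow> (nat \<Rightarrow> real) \<Rightarrow> ('o \<times> 'p) list \<Rightarrow> (('o \<times> 'p) list \<Rightarrow> 'q) \<Rightarrow> bool" where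
 "wong r E1 E2 A B w f ms \<sigma> \<longleftrightarrow>
   (\<forall>i<length A. \<forall>j<length ms. r \<bar>dist (A!i) (Cm E1 E2 \<sigma> ms j) - dist (B!i) (Dm E1 E2 \<sigma> ms j)\<bar> (w!i + f j))
 \<and> (\<forall>i<length ms. \<forall>j<length ms. r \<bar>dist (Cm E1 E2 \<sigma> ms i) (Cm E1 E2 \<sigma> ms j) - dist (Dm E1 E2 \<sigma> ms i) (Dm E1 E2 \<sigma> ms j)\<bar> (f i + f j))"

definition Sg :: "(real \<Rightarrow> real \<Rightarrow> bool) \<Rightarrow> (nat \<Rightarrow> 'a::metric_space) \<Rightarrow> ('q \<Rightarrow> 'a) \<Rightarrow> 'a list \<Rightarrow> 'a list \<Rightarrow> real list \<Rightarrow> (nat \<Rightarrow> real) \<Rightarrow> 'o::wellorder \<Rightarrow> bool" where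
 "Sg r E1 E2 A B w f \<mu> \<longleftrightarrow> (\<exists>\<sigma>. \<forall>ms. legal_play \<mu> ms \<longrightarrow> wong r E1 E2 A B w f ms \<sigma>)"

definition okm :: "(real \<Rightarrow> real \<Rightarrow> bool) \<Rightarrow> 'a::metric_space list \<Rightarrow> 'a list \<Rightarrow> real list \<Rightarrow> real \<Rightarrow> 'a \<Rightarrow> 'a \<Rightarrow> bool" where
 "okm r A B w t u v \<longleftrightarrow> (\<forall>i<length A. r \<bar>dist (A!i) u - dist (B!i) v\<bar> (w!i + t))"

lemma Cm_Suc: "Cm E1 E2 \<sigma> ((\<beta>,x)#ms) (Suc j) = Dm E1 E2 (\<lambda>l. \<sigma> ((\<beta>,x)#l)) ms j"
  by (simp add: Cm_def Dm_def)
lemma Dm_Suc: "Dm E1 E2 \<sigma> ((\<beta>,x)#ms) (Suc j) = Cm E1 E2 (\<lambda>l. \<sigma> ((\<beta>,x)#l)) ms j"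
  by (simp add: Cm_def Dm_def)
lemma Cm_0: "Cm E1 E2 \<sigma> ((\<beta>,x)#ms) 0 = E1 x"
  by (simp add: Cm_def)
lemma Dm_0: "Dm E1 E2 \<sigma> ((\<beta>,x)#ms) 0 = E2 (\<sigma> [(\<beta>,x)])"
  by (simp add: Dm_def)

lemma wong_nil: "wong r E1 E2 A B w f [] \<sigma>"
  by (simp add: wong_def)

lemma wong_cons:
  assumes lB: "length B = length A" and lw: "length w = length A" and r0: "\<forall>j. r 0 (f j + f j)"
  shows "wong r E1 E2 A B w f ((\<beta>,x)#ms) \<sigma> \<longleftrightarrow>
     okm r A B w (f 0) (E1 x) (E2 (\<sigma> [(\<beta>,x)])) \<and>
     wong r E1 E2 (B @ [E2 (\<sigma> [(\<beta>,x)])]) (A @ [E1 x]) (w @ [f 0]) (\<lambda>j. f (Suc j)) ms (\<lambda>l. \<sigma> ((\<beta>,x)#l))"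
proof -
  define y where "y = E2 (\<sigma> [(\<beta>,x)])"
  define C where "C = Cm E1 E2 (\<lambda>l. \<sigma> ((\<beta>,x)#l)) ms"
  define D where "D = Dm E1 E2 (\<lambda>l. \<sigma> ((\<beta>,x)#l)) ms"
  have I: "(\<forall>i<length A. \<forall>j<length ((\<beta>,x)#ms). r \<bar>dist (A!i) (Cm E1 E2 \<sigma> ((\<beta>,x)#ms) j) - dist (B!i) (Dm E1 E2 \<sigma> ((\<beta>,x)#ms) j)\<bar> (w!i + f j))
     \<longleftrightarrow> okm r A B w (f 0) (E1 x) y \<and> (\<forall>i<length A. \<forall>j<length ms. r \<bar>dist (B!i) (C j) - dist (A!i) (D j)\<bar> (w!i + f (Suc j)))"
    by (simp add: All_less_Suc2 Cm_Suc Dm_Suc Cm_0 Dm_0 okm_def C_def D_def y_def abs_minus_commute) blast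
  have II: "(\<forall>i<length ((\<beta>,x)#ms). \<forall>j<length ((\<beta>,x)#ms). r \<bar>dist (Cm E1 E2 \<sigma> ((\<beta>,x)#ms) i) (Cm E1 E2 \<sigma> ((\<beta>,x)#ms) j) - dist (Dm E1 E2 \<sigma> ((\<beta>,x)#ms) i) (Dm E1 E2 \<sigma> ((\<beta>,x)#ms) j)\<bar> (f i + f j))
    \<longleftrightarrow> (\<forall>j<length ms. r \<bar>dist y (C j) - dist (E1 x) (D j)\<bar> (f 0 + f (Suc j)))
      \<and> (\<forall>i<length ms. \<forall>j<length ms. r \<bar>dist (C i) (C j) - dist (D i) (D j)\<bar> (f (Suc i) + f (Suc j)))"
    using r0 apply (simp add: All_less_Suc2 Cm_Suc Dm_Suc Cm_0 Dm_0 C_def D_def y_def abs_minus_commute dist_commute add.commute)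
    by blast
  have III: "wong r E1 E2 (B @ [y]) (A @ [E1 x]) (w @ [f 0]) (\<lambda>j. f (Suc j)) ms (\<lambda>l. \<sigma> ((\<beta>,x)#l))
     \<longleftrightarrow> (\<forall>i<length A. \<forall>j<length ms. r \<bar>dist (B!i) (C j) - dist (A!i) (D j)\<bar> (w!i + f (Suc j)))
       \<and> (\<forall>j<length ms. r \<bar>dist y (C j) - dist (E1 x) (D j)\<bar> (f 0 + f (Suc j)))
      \<and> (\<forall>i<length ms. \<forall>j<length ms. r \<bar>dist (C i) (C j) - dist (D i) (D j)\<bar> (f (Suc i) + f (Suc j)))"
    using lB lw by (simp add: wong_def C_def D_def All_less_Suc nth_append) blast
  show ?thesis unfolding wong_def[of r E1 E2 A B w f "(\<beta>,x)#ms" \<sigma>] I II III y_def[symmetric] by blast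
qed

lemma Cm_cong: "j < length ms \<Longrightarrow> (\<And>l. l \<noteq> [] \<Longrightarrow> \<sigma>1 l = \<sigma>2 l) \<Longrightarrow> Cm E1 E2 \<sigma>1 ms j = Cm E1 E2 \<sigma>2 ms j"
  by (cases ms) (auto simp: Cm_def)
lemma Dm_cong: "j < length ms \<Longrightarrow> (\<And>l. l \<noteq> [] \<Longrightarrow> \<sigma>1 l = \<sigma>2 l) \<Longrightarrow> Dm E1 E2 \<sigma>1 ms j = Dm E1 E2 \<sigma>2 ms j"
  by (cases ms) (auto simp: Dm_def)
lemma wong_cong: "(\<And>l. l \<noteq> [] \<Longrightarrow> \<sigma>1 l = \<sigma>2 l) \<Longrightarrow> wong r E1 E2 A B w f ms \<sigma>1 = wong r E1 E2 A B w f ms \<sigma>2"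
  unfolding wong_def by (simp add: Cm_cong[of _ ms \<sigma>1 \<sigma>2] Dm_cong[of _ ms \<sigma>1 \<sigma>2])

lemma legal_nil: "\<not> legal_play \<mu> []" by (simp add: legal_play_def)

lemma legal_cons: "legal_play \<mu> ((\<beta>,x)#ms) \<longleftrightarrow> \<beta> < \<mu> \<and> (if ms = [] then \<not>(\<exists>\<gamma>. \<gamma> < \<beta>) else legal_play \<beta> ms)"
proof (cases ms)
  case Nil then show ?thesis by (simp add: legal_play_def)
next
  case (Cons m ms')
  have "(\<forall>i. Suc i < length ((\<beta>,x)#ms) \<longrightarrow> fst (((\<beta>,x)#ms) ! Suc i) < fst (((\<beta>,x)#ms) ! i))
     \<longleftrightarrow> fst (ms!0) < \<beta> \<and> (\<forall>i. Suc i < length ms \<longrightarrow> fst (ms ! Suc i) < fst (ms ! i))"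
    using Cons by (auto simp: nth_Cons split: nat.splits) 
  then show ?thesis using Cons by (auto simp: legal_play_def)
qed

lemma bot_least: "(LEAST \<gamma>::'o::wellorder. True) \<le> \<delta>"
  by (rule Least_le) simp

lemma Sg_unfold:
  fixes \<beta> \<mu> :: "'o::wellorder"
  assumes S: "Sg r E1 E2 A B w f \<mu>" and b: "\<beta> < \<mu>" and lB: "length B = length A" and lw: "length w = length A"
    and r0: "\<forall>j. r 0 (f j + f j)"
  shows "\<exists>y. okm r A B w (f 0) (E1 x) (E2 y) \<and> ((\<exists>\<gamma>. \<gamma> < \<beta>) \<longrightarrow> Sg r E1 E2 (B@[E2 y]) (A@[E1 x]) (w@[f 0]) (\<lambda>j. f (Suc j)) \<beta>)"
proof -
  obtain \<sigma> where \<sigma>: "\<And>ms. legal_play \<mu> ms \<Longrightarrow> wong r E1 E2 A B w f ms \<sigma>" using S by (auto simp: Sg_def)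
  define bt where "bt = (LEAST \<gamma>::'o. True)"
  have btl: "\<not> (\<exists>\<delta>. \<delta> < bt)" using bot_least[of ] unfolding bt_def using bot_least leD by blast
  have "\<exists>ms. legal_play \<mu> ((\<beta>,x)#ms)"
  proof (cases "\<exists>\<gamma>. \<gamma> < \<beta>")
    case True
    then obtain \<gamma> where g: "\<gamma> < \<beta>" by blast
    have "bt < \<beta>" unfolding bt_def using bot_least[of \<gamma>] g by (rule le_less_trans)
    then have "legal_play \<mu> ((\<beta>,x)#[(bt,x)])" using b btl by (simp add: legal_cons)
    then show ?thesis by blast
  next
    case False then show ?thesis using b by (auto simp: legal_cons)
  qed
  then obtain ms where "legal_play \<mu> ((\<beta>,x)#ms)" by blast
  then have "wong r E1 E2 A B w f ((\<beta>,x)#ms) \<sigma>" by (rule \<sigma>)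
  then have ok: "okm r A B w (f 0) (E1 x) (E2 (\<sigma> [(\<beta>,x)]))" by (simp add: wong_cons[where A=A and B=B and w=w and f=f and r=r, OF lB lw r0])
  have "(\<exists>\<gamma>. \<gamma> < \<beta>) \<longrightarrow> Sg r E1 E2 (B@[E2 (\<sigma> [(\<beta>,x)])]) (A@[E1 x]) (w@[f 0]) (\<lambda>j. f (Suc j)) \<beta>"
    unfolding Sg_def
  proof (intro impI exI allI)
    fix ms' assume "legal_play \<beta> ms'"
    then have "legal_play \<mu> ((\<beta>,x)#ms')" using b legal_nil by (auto simp: legal_cons)
    then have "wong r E1 E2 A B w f ((\<beta>,x)#ms') \<sigma>" by (rule \<sigma>)
    then show "wong r E1 E2 (B@[E2 (\<sigma> [(\<beta>,x)])]) (A@[E1 x]) (w@[f 0]) (\<lambda>j. f (Suc j)) ms' (\<lambda>l. \<sigma> ((\<beta>,x)#l))"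
      by (simp add: wong_cons[where A=A and B=B and w=w and f=f and r=r, OF lB lw r0])
  qed
  with ok show ?thesis by blast
qed

lemma Sg_fold:
  fixes \<mu> :: "'o::wellorder"
  assumes lB: "length B = length A" and lw: "length w = length A" and r0: "\<forall>j. r 0 (f j + f j)"
    and H: "\<forall>\<beta><\<mu>. \<forall>x. \<exists>y. okm r A B w (f 0) (E1 x) (E2 y) \<and> ((\<exists>\<gamma>. \<gamma> < \<beta>) \<longrightarrow> Sg r E1 E2 (B@[E2 y]) (A@[E1 x]) (w@[f 0]) (\<lambda>j. f (Suc j)) \<beta>)"
  shows "Sg r E1 E2 A B w f \<mu>"
proof -
  define Q where "Q (\<beta>::'o) x y \<longleftrightarrow> okm r A B w (f 0) (E1 x) (E2 y) \<and> ((\<exists>\<gamma>. \<gamma> < \<beta>) \<longrightarrow> Sg r E1 E2 (B@[E2 y]) (A@[E1 x]) (w@[f 0]) (\<lambda>j. f (Suc j)) \<beta>)" for \<beta> x y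
  define Y where "Y \<beta> x = (SOME y. Q \<beta> x y)" for \<beta> x
  have QY: "Q \<beta> x (Y \<beta> x)" if "\<beta> < \<mu>" for \<beta> x
    unfolding Y_def using H that by (metis (no_types, lifting) someI_ex Q_def)
  define T where "T \<beta> x = (SOME \<tau>. \<forall>ms. legal_play \<beta> ms \<longrightarrow> wong r E1 E2 (B@[E2 (Y \<beta> x)]) (A@[E1 x]) (w@[f 0]) (\<lambda>j. f (Suc j)) ms \<tau>)" for \<beta> x
  have TY: "\<forall>ms. legal_play \<beta> ms \<longrightarrow> wong r E1 E2 (B@[E2 (Y \<beta> x)]) (A@[E1 x]) (w@[f 0]) (\<lambda>j. f (Suc j)) ms (T \<beta> x)"
    if "\<beta> < \<mu>" "\<exists>\<gamma>. \<gamma> < \<beta>" for \<beta> x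
  proof -
    have "Sg r E1 E2 (B@[E2 (Y \<beta> x)]) (A@[E1 x]) (w@[f 0]) (\<lambda>j. f (Suc j)) \<beta>" using QY[OF that(1)] that(2) Q_def by blast
    then show ?thesis unfolding T_def Sg_def by (rule someI_ex)
  qed
  define \<sigma> where "\<sigma> l = (if tl l = [] then Y (fst (hd l)) (snd (hd l)) else T (fst (hd l)) (snd (hd l)) (tl l))" for l
  show ?thesis unfolding Sg_def
  proof (intro exI allI impI)
    fix ms assume L: "legal_play \<mu> ms"
    then obtain \<beta> x ms' where ms: "ms = (\<beta>,x)#ms'" using legal_nil by (metis list.exhaust prod.exhaust)
    have b: "\<beta> < \<mu>" using L ms legal_cons by blast
    have s0: "\<sigma> [(\<beta>,x)] = Y \<beta> x" by (simp add: \<sigma>_def)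
    have ok: "okm r A B w (f 0) (E1 x) (E2 (\<sigma> [(\<beta>,x)]))" using QY[OF b] s0 Q_def by simp
    have "wong r E1 E2 (B @ [E2 (\<sigma> [(\<beta>,x)])]) (A @ [E1 x]) (w @ [f 0]) (\<lambda>j. f (Suc j)) ms' (\<lambda>l. \<sigma> ((\<beta>,x)#l))"
    proof (cases "ms' = []")
      case True then show ?thesis by (simp add: wong_nil)
    next
      case False
      then have L': "legal_play \<beta> ms'" using L ms legal_cons[of \<mu> \<beta> x ms'] by simp
      then have "\<exists>\<gamma>. \<gamma> < \<beta>" using False by (metis legal_play_def)
      then have "wong r E1 E2 (B@[E2 (Y \<beta> x)]) (A@[E1 x]) (w@[f 0]) (\<lambda>j. f (Suc j)) ms' (T \<beta> x)"
        using TY[OF b] L' by blast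
      moreover have "\<And>l. l \<noteq> [] \<Longrightarrow> \<sigma> ((\<beta>,x)#l) = T \<beta> x l" by (simp add: \<sigma>_def)
      ultimately show ?thesis using s0 wong_cong by (metis (no_types, lifting))
    qed
    then show "wong r E1 E2 A B w f ms \<sigma>" unfolding ms using ok by (simp add: wong_cons[where A=A and B=B and w=w and f=f and r=r, OF lB lw r0])
  qed
qed



lemma h1: "\<bar>dist a c - dist b d\<bar> \<le> dist a b + dist c d"
  by (smt (verit) dist_commute dist_triangle)

lemma h2: "\<bar>dist a' c - dist b' d'\<bar> \<le> \<bar>dist a c - dist b d\<bar> + dist a a' + dist b b' + dist d d'"
proof -
  have 1: "\<bar>dist a' c - dist a c\<bar> \<le> dist a a'" using h1[of a' c a c] by (simp add: dist_commute)
  have 2: "\<bar>dist b' d' - dist b d\<bar> \<le> dist b b' + dist d d'" using h1[of b' d' b d] by (simp add: dist_commute)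
  show ?thesis using 1 2 by linarith
qed

lemma Sg_closed:
  fixes \<mu> :: "'o::wellorder" and e :: "nat \<Rightarrow> 'a::metric_space"
  assumes proper: "\<And>(x::'a) r. compact (cball x r)"
  shows "\<And>A B w g AN BN. length B = length A \<Longrightarrow> length w = length A \<Longrightarrow> (\<forall>j. 0 \<le> g j) \<Longrightarrow>
     (\<forall>n. length (AN n) = length A \<and> length (BN n) = length A) \<Longrightarrow>
     (\<forall>i<length A. (\<lambda>n. AN n ! i) \<longlonglongrightarrow> A!i \<and> (\<lambda>n. BN n ! i) \<longlonglongrightarrow> B!i) \<Longrightarrow>
     (\<forall>n. Sg (\<le>) e id (AN n) (BN n) w g \<mu>) \<Longrightarrow> Sg (\<le>) e id A B w g \<mu>"
proof (induction \<mu> rule: less_induct)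
  case (less \<mu> A B w g AN BN)
  note lB = less.prems(1) and lw = less.prems(2) and gnn = less.prems(3) and lN = less.prems(4)
    and cv = less.prems(5) and SN = less.prems(6)
  show ?case
  proof (cases "length A = 0")
    case True then have "AN 0 = A" "BN 0 = B" using lN lB by auto
    then show ?thesis using SN by metis
  next
    case False
    have r0: "\<forall>j. (0::real) \<le> g j + g j" using gnn by (simp add: add_nonneg_nonneg)
    show ?thesis
    proof (rule Sg_fold[where A=A and B=B and w=w and f=g and r="(\<le>)", OF lB lw r0], intro allI impI)
      fix \<beta> x assume b: "\<beta> < \<mu>"
      have "\<forall>n. \<exists>z. okm (\<le>) (AN n) (BN n) w (g 0) (e x) z \<and> ((\<exists>\<gamma>. \<gamma><\<beta>) \<longrightarrow> Sg (\<le>) e id (BN n @ [z]) (AN n @ [e x]) (w@[g 0]) (\<lambda>j. g (Suc j)) \<beta>)"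
      proof
        fix n
        have "length (BN n) = length (AN n)" "length w = length (AN n)" using lN lw by auto
        from Sg_unfold[where A="AN n" and B="BN n" and w=w and f=g and r="(\<le>)", OF SN[rule_format, of n] b this r0, of x] show "\<exists>z. okm (\<le>) (AN n) (BN n) w (g 0) (e x) z \<and> ((\<exists>\<gamma>. \<gamma><\<beta>) \<longrightarrow> Sg (\<le>) e id (BN n @ [z]) (AN n @ [e x]) (w@[g 0]) (\<lambda>j. g (Suc j)) \<beta>)"
          by simp
      qed
      then obtain Z where Z: "\<And>n. okm (\<le>) (AN n) (BN n) w (g 0) (e x) (Z n) \<and> ((\<exists>\<gamma>. \<gamma><\<beta>) \<longrightarrow> Sg (\<le>) e id (BN n @ [Z n]) (AN n @ [e x]) (w@[g 0]) (\<lambda>j. g (Suc j)) \<beta>)"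
        by metis
      have p0: "0 < length A" using False by simp
      have cA: "(\<lambda>n. AN n ! 0) \<longlonglongrightarrow> A!0" and cB: "(\<lambda>n. BN n ! 0) \<longlonglongrightarrow> B!0" using cv p0 by auto
      obtain K1 where K1: "\<And>n. dist (B!0) (BN n ! 0) \<le> K1"
        using convergent_imp_bounded[OF cB] bounded_any_center[of _ "B!0"] by auto
      obtain K2 where K2: "\<And>n. dist (A!0) (AN n ! 0) \<le> K2"
        using convergent_imp_bounded[OF cA] bounded_any_center[of _ "A!0"] by auto
      have Zb: "Z n \<in> cball (B!0) (K1 + K2 + dist (A!0) (e x) + w!0 + g 0)" for n
      proof -
        have "\<bar>dist (AN n ! 0) (e x) - dist (BN n ! 0) (Z n)\<bar> \<le> w!0 + g 0"
          using Z[of n] p0 lN by (simp add: okm_def)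
        moreover have "dist (B!0) (Z n) \<le> dist (B!0) (BN n ! 0) + dist (BN n ! 0) (Z n)" by (rule dist_triangle)
        moreover have "dist (AN n ! 0) (e x) \<le> dist (A!0) (AN n ! 0) + dist (A!0) (e x)"
          by (metis dist_commute dist_triangle add.commute)
        ultimately show ?thesis using K1[of n] K2[of n] by (simp add: mem_cball)
      qed
      obtain l r where r: "strict_mono r" and l: "(Z \<circ> r) \<longlonglongrightarrow> l"
        using compact_imp_seq_compact[OF proper] Zb unfolding seq_compact_def by metis
      have ok: "okm (\<le>) A B w (g 0) (e x) l"
        unfolding okm_def
      proof (intro allI impI)
        fix i assume i: "i < length A"
        have ca: "(\<lambda>n. AN (r n) ! i) \<longlonglongrightarrow> A!i" using LIMSEQ_subseq_LIMSEQ[OF _ r, of "\<lambda>n. AN n ! i"] cv i by (simp add: o_def)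
        have cb: "(\<lambda>n. BN (r n) ! i) \<longlonglongrightarrow> B!i" using LIMSEQ_subseq_LIMSEQ[OF _ r, of "\<lambda>n. BN n ! i"] cv i by (simp add: o_def)
        have cz: "(\<lambda>n. Z (r n)) \<longlonglongrightarrow> l" using l by (simp add: o_def)
        have "(\<lambda>n. \<bar>dist (AN (r n) ! i) (e x) - dist (BN (r n) ! i) (Z (r n))\<bar>) \<longlonglongrightarrow> \<bar>dist (A!i) (e x) - dist (B!i) l\<bar>"
          by (intro tendsto_intros ca cb cz)
        moreover have "\<forall>n. \<bar>dist (AN (r n) ! i) (e x) - dist (BN (r n) ! i) (Z (r n))\<bar> \<le> w!i + g 0"
          using Z i lN by (simp add: okm_def)
        ultimately show "\<bar>dist (A!i) (e x) - dist (B!i) l\<bar> \<le> w!i + g 0"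
          by (meson LIMSEQ_le_const2)
      qed
      have "(\<exists>\<gamma>. \<gamma><\<beta>) \<longrightarrow> Sg (\<le>) e id (B @ [l]) (A @ [e x]) (w@[g 0]) (\<lambda>j. g (Suc j)) \<beta>"
      proof
        assume nb: "\<exists>\<gamma>. \<gamma><\<beta>"
        have f1: "length (A @ [e x]) = length (B @ [l])" using lB by simp
        have f2: "length (w @ [g 0]) = length (B @ [l])" using lB lw by simp
        have f3: "\<forall>j. 0 \<le> g (Suc j)" using gnn by simp
        have f4: "\<forall>n. length (BN (r n) @ [Z (r n)]) = length (B @ [l]) \<and> length (AN (r n) @ [e x]) = length (B @ [l])"
            using lN lB by simp
        have f6: "\<forall>n. Sg (\<le>) e id (BN (r n) @ [Z (r n)]) (AN (r n) @ [e x]) (w @ [g 0]) (\<lambda>j. g (Suc j)) \<beta>"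
            using Z nb by blast
        have f5: "\<forall>i<length (B @ [l]). (\<lambda>n. (BN (r n) @ [Z (r n)]) ! i) \<longlonglongrightarrow> (B @ [l]) ! i \<and> (\<lambda>n. (AN (r n) @ [e x]) ! i) \<longlonglongrightarrow> (A @ [e x]) ! i"
          proof (intro allI impI)
            fix i assume i: "i < length (B @ [l])"
            show "(\<lambda>n. (BN (r n) @ [Z (r n)]) ! i) \<longlonglongrightarrow> (B @ [l]) ! i \<and> (\<lambda>n. (AN (r n) @ [e x]) ! i) \<longlonglongrightarrow> (A @ [e x]) ! i"
            proof (cases "i < length A")
              case True
              have ca: "(\<lambda>n. AN (r n) ! i) \<longlonglongrightarrow> A!i" using LIMSEQ_subseq_LIMSEQ[OF _ r, of "\<lambda>n. AN n ! i"] cv True by (simp add: o_def)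
              have cb: "(\<lambda>n. BN (r n) ! i) \<longlonglongrightarrow> B!i" using LIMSEQ_subseq_LIMSEQ[OF _ r, of "\<lambda>n. BN n ! i"] cv True by (simp add: o_def)
              show ?thesis using ca cb True lN lB by (simp add: nth_append)
            next
              case False
              then have "i = length A" using i lB by simp
              then show ?thesis using l lN lB by (simp add: nth_append o_def)
            qed
          qed
        show "Sg (\<le>) e id (B @ [l]) (A @ [e x]) (w@[g 0]) (\<lambda>j. g (Suc j)) \<beta>"
          by (rule less.IH[OF b f1 f2 f3 f4 f5 f6])
      qed
      with ok show "\<exists>y. okm (\<le>) A B w (g 0) (e x) (id y) \<and> ((\<exists>\<gamma>. \<gamma><\<beta>) \<longrightarrow> Sg (\<le>) e id (B @ [id y]) (A @ [e x]) (w@[g 0]) (\<lambda>j. g (Suc j)) \<beta>)"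
        by auto
    qed
  qed
qed



lemma arith_h0: fixes L a E dz w g v f :: real shows "L \<le> a + E + dz \<Longrightarrow> a \<le> w + g \<Longrightarrow> 2*E \<le> v - w \<Longrightarrow> 0 \<le> E \<Longrightarrow> 2*dz < f - g \<Longrightarrow> 0 \<le> dz \<Longrightarrow> L < v + f"
  by linarith

lemma arith_h: fixes L a dA dB dz w g v f :: real
  assumes "L \<le> a + dA + dB + dz" "a \<le> w + g" "dA + dB \<le> (v - w)/2" "0 \<le> dA + dB" "dz < (f - g)/2" "0 \<le> dz"
  shows "L < v + f"
proof (rule arith_h0[of L a "dA + dB" dz w g v f])
  show "L \<le> a + (dA + dB) + dz" using assms(1) by (simp add: add.assoc)
  show "2 * (dA + dB) \<le> v - w" using assms(3) by simp
  show "2 * dz < f - g" using assms(5) by simp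
qed (use assms in auto)

lemma Sg_approx:
  fixes \<mu> :: "'o::wellorder" and e :: "nat \<Rightarrow> 'a::metric_space"
  assumes dense: "\<And>z (\<epsilon>::real). \<epsilon> > 0 \<Longrightarrow> \<exists>y. dist z (e y) < \<epsilon>"
  shows "\<And>A B A' B' w w' g f. length B = length A \<Longrightarrow> length w = length A \<Longrightarrow> length A' = length A \<Longrightarrow>
    length B' = length A \<Longrightarrow> length w' = length A \<Longrightarrow>
   (\<forall>i<length A. dist (A!i) (A'!i) + dist (B!i) (B'!i) \<le> (w'!i - w!i)/2) \<Longrightarrow> (\<forall>j. 0 \<le> g j) \<Longrightarrow> (\<forall>j. g j < f j) \<Longrightarrow>
   Sg (\<le>) e id A B w g \<mu> \<Longrightarrow> Sg (<) e e A' B' w' f \<mu>"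
proof (induction \<mu> rule: less_induct)
  case (less \<mu> A B A' B' w w' g f)
  note lB = less.prems(1) and lw = less.prems(2) and lA' = less.prems(3) and lB' = less.prems(4)
    and lw' = less.prems(5) and err = less.prems(6) and gnn = less.prems(7) and gf = less.prems(8)
    and S = less.prems(9)
  have r0: "\<forall>j. (0::real) \<le> g j + g j" using gnn by (simp add: add_nonneg_nonneg)
  have r0': "\<forall>j. (0::real) < f j + f j" using gnn gf by (smt (verit))
  have lB2: "length B' = length A'" and lw2: "length w' = length A'" using lB' lw' lA' by auto
  show ?case
  proof (rule Sg_fold[where A=A' and B=B' and w=w' and f=f and r="(<)", OF lB2 lw2 r0'], intro allI impI)
    fix \<beta> x assume b: "\<beta> < \<mu>"
    obtain z where z: "okm (\<le>) A B w (g 0) (e x) z"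
      and zS: "(\<exists>\<gamma>. \<gamma><\<beta>) \<longrightarrow> Sg (\<le>) e id (B @ [z]) (A @ [e x]) (w@[g 0]) (\<lambda>j. g (Suc j)) \<beta>"
      using Sg_unfold[where A=A and B=B and w=w and f=g and r="(\<le>)", OF S b lB lw r0, of x] unfolding id_apply by blast
    have "(f 0 - g 0)/2 > 0" using gf by simp
    then obtain y where y: "dist z (e y) < (f 0 - g 0)/2" using dense by blast
    have ok: "okm (<) A' B' w' (f 0) (e x) (e y)"
      unfolding okm_def
    proof (intro allI impI)
      fix i assume i: "i < length A'"
      have 1: "\<bar>dist (A!i) (e x) - dist (B!i) z\<bar> \<le> w!i + g 0" using z i lA' by (simp add: okm_def)
      have 2: "dist (A!i) (A'!i) + dist (B!i) (B'!i) \<le> (w'!i - w!i)/2" using err i lA' by simp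
      have 3: "0 \<le> dist (A!i) (A'!i) + dist (B!i) (B'!i)" by simp
      show "\<bar>dist (A'!i) (e x) - dist (B'!i) (e y)\<bar> < w'!i + f 0"
        using h2[of "A'!i" "e x" "B'!i" "e y" "A!i" "B!i" z] 1 2 3 y zero_le_dist[of z "e y"] by (rule arith_h)
    qed
    have "(\<exists>\<gamma>. \<gamma><\<beta>) \<longrightarrow> Sg (<) e e (B' @ [e y]) (A' @ [e x]) (w'@[f 0]) (\<lambda>j. f (Suc j)) \<beta>"
    proof
      assume nb: "\<exists>\<gamma>. \<gamma><\<beta>"
      have f1: "length (A @ [e x]) = length (B @ [z])" "length (w @ [g 0]) = length (B @ [z])"
        "length (B' @ [e y]) = length (B @ [z])" "length (A' @ [e x]) = length (B @ [z])"
        "length (w' @ [f 0]) = length (B @ [z])" using lB lw lA' lB' lw' by auto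
      have f2: "\<forall>i<length (B @ [z]). dist ((B @ [z])!i) ((B' @ [e y])!i) + dist ((A @ [e x])!i) ((A' @ [e x])!i)
           \<le> ((w' @ [f 0])!i - (w @ [g 0])!i)/2"
      proof (intro allI impI)
        fix i assume i: "i < length (B @ [z])"
        show "dist ((B @ [z])!i) ((B' @ [e y])!i) + dist ((A @ [e x])!i) ((A' @ [e x])!i)
           \<le> ((w' @ [f 0])!i - (w @ [g 0])!i)/2"
        proof (cases "i < length A")
          case True
          then show ?thesis using err lB lw lA' lB' lw' by (simp add: nth_append add.commute)
        next
          case False
          then have "i = length A" using i lB by simp
          then show ?thesis using y lB lw lA' lB' lw' by (simp add: nth_append)
        qed
      qed
      have f3: "\<forall>j. 0 \<le> g (Suc j)" "\<forall>j. g (Suc j) < f (Suc j)" using gnn gf by auto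
      have f4: "Sg (\<le>) e id (B @ [z]) (A @ [e x]) (w@[g 0]) (\<lambda>j. g (Suc j)) \<beta>" using zS nb by blast
      show "Sg (<) e e (B' @ [e y]) (A' @ [e x]) (w'@[f 0]) (\<lambda>j. f (Suc j)) \<beta>"
        by (rule less.IH[OF b f1 f2 f3 f4])
    qed
    with ok show "\<exists>y. okm (<) A' B' w' (f 0) (e x) (e y) \<and> ((\<exists>\<gamma>. \<gamma><\<beta>) \<longrightarrow> Sg (<) e e (B' @ [e y]) (A' @ [e x]) (w'@[f 0]) (\<lambda>j. f (Suc j)) \<beta>)"
      by blast
  qed
qed

lemma Cm_play: "Cm e e \<sigma> ms j = e (play_c \<sigma> ms j)" by (simp add: Cm_def play_c_def)
lemma Dm_play: "Dm e e \<sigma> ms j = e (play_d \<sigma> ms j)" by (simp add: Dm_def play_d_def)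

lemma sim_Sg: "sim e f a b \<mu> \<longleftrightarrow> Sg (<) e e a b (replicate (length a) 0) (\<lambda>j. real_of_rat (f j)) \<mu>"
  by (simp add: sim_def Sg_def wong_def game_won_def Cm_play Dm_play)

lemma Sg_mono: "Sg (<) E1 E2 A B w f \<mu> \<Longrightarrow> Sg (\<le>) E1 id A B w f \<mu>"
proof -
  assume "Sg (<) E1 E2 A B w f \<mu>"
  then obtain \<sigma> where s: "\<And>ms. legal_play \<mu> ms \<Longrightarrow> wong (<) E1 E2 A B w f ms \<sigma>" by (auto simp: Sg_def)
  have C: "Cm E1 id (\<lambda>l. E2 (\<sigma> l)) = Cm E1 E2 \<sigma>" "Dm E1 id (\<lambda>l. E2 (\<sigma> l)) = Dm E1 E2 \<sigma>"
    by (auto simp: Cm_def Dm_def fun_eq_iff)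
  show ?thesis unfolding Sg_def
  proof (intro exI allI impI)
    fix ms assume "legal_play \<mu> ms"
    then have "wong (<) E1 E2 A B w f ms \<sigma>" by (rule s)
    then show "wong (\<le>) E1 id A B w f ms (\<lambda>l. E2 (\<sigma> l))"
      unfolding wong_def C by (auto intro: less_imp_le)
  qed
qed

lemma computable_Suc: "computable G \<Longrightarrow> computable (\<lambda>n. G (Suc n))"
proof -
  assume "computable G"
  then obtain g0 where g0: "recfn 1 g0" "\<And>x. G x = g0 [x]" by (auto simp: computable_def)
  have "recfn 1 (\<lambda>xs. g0 (map (\<lambda>j. (\<lambda>j xs. Suc (hd xs)) j xs) [0..<1]))"
    by (rule rf_comp[OF g0(1)]) (use rf_succ in simp)
  then show ?thesis unfolding computable_def using g0(2) by (intro exI[of _ "\<lambda>xs. g0 (map (\<lambda>j. (\<lambda>j xs. Suc (hd xs)) j xs) [0..<1])"]) simp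
qed

lemma REC_Suc: "f \<in> REC \<Longrightarrow> (\<lambda>n. f (Suc n)) \<in> REC"
proof -
  assume f: "f \<in> REC"
  then obtain G H where GH: "computable G" "computable H" "\<And>n. f n = of_nat (G n) / of_nat (H n)"
    by (auto simp: REC_def recursive_rat_def)
  have "recursive_rat (\<lambda>n. f (Suc n))" unfolding recursive_rat_def
    using computable_Suc[OF GH(1)] computable_Suc[OF GH(2)] GH(3) by blast
  moreover have "(\<lambda>n. real_of_rat (f (Suc n))) \<longlonglongrightarrow> 0"
    using f LIMSEQ_Suc[of "\<lambda>n. real_of_rat (f n)"] by (simp add: REC_def)
  ultimately show ?thesis using f by (simp add: REC_def)
qed



lemma tdist_le: "k < length u \<Longrightarrow> dist (u!k) (v!k) \<le> tuple_dist u v"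
  unfolding tuple_dist_def by (rule member_le_sum) auto
lemma nth_app1: "length xs = n \<Longrightarrow> i < n \<Longrightarrow> (xs @ ys) ! i = xs ! i" by (simp add: nth_append)
lemma nth_app2: "length xs = n \<Longrightarrow> (xs @ ys) ! (n + i) = ys ! i" by (simp add: nth_append)

theorem fact4p5:
  fixes d :: "nat \<Rightarrow> nat \<Rightarrow> real"
    and e :: "nat \<Rightarrow> 'a::metric_space"
    and \<alpha> :: "'o::wellorder"
    and a b :: "'a list"
    and an bn :: "nat \<Rightarrow> 'a list"
  assumes d_metric: "\<And>x y. d x y = 0 \<longleftrightarrow> x = y"
    and d_sym: "\<And>x y. d x y = d y x"
    and d_tri: "\<And>x y z. d x z \<le> d x y + d y z"
    and e_isom: "\<And>x y. dist (e x) (e y) = d x y"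
    and e_dense: "closure (range e) = UNIV"
    and compl: "complete (UNIV :: 'a set)"
    and proper: "\<And>(x::'a) r. compact (cball x r)"
    and len: "length b = length a"
    and len_n: "\<And>n. length (an n) = length a \<and> length (bn n) = length a"
    and lim: "(\<lambda>n. tuple_dist (an n @ bn n) (a @ b)) \<longlonglongrightarrow> 0"
    and R_n: "\<And>n. R_gt e (an n) (bn n) \<alpha>"
  shows "R_gt e a b \<alpha>"
proof -
  have dns: "\<exists>y. dist z (e y) < \<epsilon>" if eps: "\<epsilon> > 0" for z and \<epsilon> :: real
  proof -
    have "z \<in> closure (range e)" using e_dense by simp
    then have "\<exists>y'\<in>range e. dist y' z < \<epsilon>" using closure_approachable eps by blast
    then obtain y where "dist (e y) z < \<epsilon>" by blast
    then show ?thesis by (metis dist_commute)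
  qed
  have cv: "\<forall>i<length a. (\<lambda>n. an n ! i) \<longlonglongrightarrow> a!i \<and> (\<lambda>n. bn n ! i) \<longlonglongrightarrow> b!i"
  proof (intro allI impI conjI)
    fix i assume i: "i < length a"
    have le1: "dist (an n ! i) (a!i) \<le> tuple_dist (an n @ bn n) (a @ b)" for n
    proof -
      have "dist ((an n @ bn n)!i) ((a@b)!i) \<le> tuple_dist (an n @ bn n) (a @ b)"
        apply (rule tdist_le) using i len_n[of n] by simp
      moreover have "(an n @ bn n)!i = an n ! i" by (rule nth_app1[OF conjunct1[OF len_n[of n]] i])
      moreover have "(a @ b)!i = a ! i" by (rule nth_app1[OF refl i])
      ultimately show ?thesis by metis
    qed
    have le2: "dist (bn n ! i) (b!i) \<le> tuple_dist (an n @ bn n) (a @ b)" for n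
    proof -
      have "dist ((an n @ bn n)!(length a + i)) ((a@b)!(length a + i)) \<le> tuple_dist (an n @ bn n) (a @ b)"
        apply (rule tdist_le) using i len_n[of n] by simp
      moreover have "(an n @ bn n)!(length a + i) = bn n ! i" by (rule nth_app2[OF conjunct1[OF len_n[of n]]])
      moreover have "(a @ b)!(length a + i) = b ! i" by (rule nth_app2[OF refl])
      ultimately show ?thesis by metis
    qed
    show "(\<lambda>n. an n ! i) \<longlonglongrightarrow> a!i" apply (rule tendsto_dist_iff[THEN iffD2])
      by (rule Lim_null_comparison[OF _ lim]) (simp add: le1)
    show "(\<lambda>n. bn n ! i) \<longlonglongrightarrow> b!i" apply (rule tendsto_dist_iff[THEN iffD2])
      by (rule Lim_null_comparison[OF _ lim]) (simp add: le2)
  qed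
  show ?thesis unfolding R_gt_def
  proof
    assume "\<exists>\<mu>\<le>\<alpha>. \<exists>f\<in>REC. \<not> sim e f a b \<mu>"
    then obtain \<mu> f where \<mu>: "\<mu> \<le> \<alpha>" and f: "f \<in> REC" and ns: "\<not> sim e f a b \<mu>" by blast
    define g where "g = (\<lambda>n. f (Suc n))"
    have gR: "g \<in> REC" using REC_Suc[OF f] g_def by simp
    have S: "\<forall>n. Sg (\<le>) e id (an n) (bn n) (replicate (length a) 0) (\<lambda>j. real_of_rat (g j)) \<mu>"
    proof
      fix n
      have "\<not> (\<exists>\<mu>'\<le>\<alpha>. \<exists>f'\<in>REC. \<not> sim e f' (an n) (bn n) \<mu>')" using R_n[of n] unfolding R_gt_def .
      then have "sim e g (an n) (bn n) \<mu>" using \<mu> gR by blast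
      then have "Sg (<) e e (an n) (bn n) (replicate (length (an n)) 0) (\<lambda>j. real_of_rat (g j)) \<mu>"
        by (simp only: sim_Sg)
      then have "Sg (\<le>) e id (an n) (bn n) (replicate (length (an n)) 0) (\<lambda>j. real_of_rat (g j)) \<mu>"
        by (rule Sg_mono)
      then show "Sg (\<le>) e id (an n) (bn n) (replicate (length a) 0) (\<lambda>j. real_of_rat (g j)) \<mu>"
        using len_n[of n] by simp
    qed
    have "\<forall>n. 0 < g n" using gR unfolding REC_def by blast
    then have gnn: "\<forall>j. 0 \<le> real_of_rat (g j)" by (simp add: less_imp_le)
    have lw: "length (replicate (length a) (0::real)) = length a" by simp
    have C: "Sg (\<le>) e id a b (replicate (length a) 0) (\<lambda>j. real_of_rat (g j)) \<mu>"
      by (rule Sg_closed[OF proper, where A=a and B=b and w="replicate (length a) 0" and g="\<lambda>j. real_of_rat (g j)" and AN=an and BN=bn, OF len lw gnn _ cv S]) (use len_n in simp)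
    have "\<forall>m n. m < n \<longrightarrow> f n < f m" using f unfolding REC_def by blast
    then have gf: "\<forall>j. real_of_rat (g j) < real_of_rat (f j)" by (simp add: g_def of_rat_less)
    have err: "\<forall>i<length a. dist (a!i) (a!i) + dist (b!i) (b!i) \<le> (replicate (length a) 0 ! i - replicate (length a) (0::real) ! i)/2"
      by simp
    have "Sg (<) e e a b (replicate (length a) 0) (\<lambda>j. real_of_rat (f j)) \<mu>"
      by (rule Sg_approx[where A=a and B=b and A'=a and B'=b and w="replicate (length a) 0" and w'="replicate (length a) 0" and g="\<lambda>j. real_of_rat (g j)" and f="\<lambda>j. real_of_rat (f j)", OF dns len lw refl len lw err gnn gf C])
    then have "sim e f a b \<mu>" by (simp only: sim_Sg)
    with ns show False by blast
  qed
qed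

end
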